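(* Let $n\ge d+1\ge 3$ be integers and let $\mathcal{F}\subseteq\binom{[n]}{d+1}$. Suppose that for every $F\in\mathcal{F}$ there exists a subset $B_F\subseteq F$ with $|B_F|=d$ such that $F'\cap F\neq B_F$ for every $F'\in\mathcal{F}$. Then $|\mathcal{F}|\le\binom{n-1}{d}$. Moreover, equality holds if and only if $\mathcal{F}$ is a star of size $\binom{n-1}{d}$, i.e. $\mathcal{F}=\{F\in\binom{[n]}{d+1}: a\in F\}$ for some $a\in[n]$.
   Context: $\binom{[n]}{k}$ denotes the family of all $k$-element subsets of $[n]=\{1,\dots,n\}$. A star is a family all of whose members contain a common element. *)

theory Defs
  imports Main
begin

definition ksubsets :: "nat \<Rightarrow> nat \<Rightarrow> nat set set" where
  "ksubsets n k = {S. S \<subseteq> {1..n} \<and> card S = k}"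

end

theory Submission imports Defs begin

context
  fixes X :: "nat set" and d :: nat and FF :: "nat set set" and B :: "nat set \<Rightarrow> nat set"
  assumes finX: "finite X"
    and FX: "\<forall>F\<in>FF. F \<subseteq> X \<and> card F = d+1"
    and BF: "\<forall>F\<in>FF. B F \<subseteq> F \<and> card (B F) = d"
    and priv: "\<forall>F\<in>FF. \<forall>G\<in>FF. B F \<subseteq> G \<longrightarrow> G = F"
begin

lemma finFF: "finite FF"
proof -
  have "FF \<subseteq> Pow X" using FX by auto
  thus ?thesis using finX finite_subset by blast
qed

lemma privI: "F \<in> FF \<Longrightarrow> G \<in> FF \<Longrightarrow> B F \<subseteq> G \<Longrightarrow> G = F"
  using priv by blast

lemma injB: "inj_on B FF"
  using priv BF by (metis inj_onI order_refl)

lemma count_F: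
  assumes F: "F \<in> FF"
  shows "card {H. (H \<subseteq> X \<and> card H = d+1) \<and> H \<notin> FF \<and> B F \<subseteq> H} = card X - (d+1)"
proof -
  have FsX: "F \<subseteq> X" and cF: "card F = d+1" using FX F by auto
  have BsF: "B F \<subseteq> F" and cB: "card (B F) = d" using BF F by auto
  have finF: "finite F" using FsX finX finite_subset by blast
  have finB: "finite (B F)" using BsF finF finite_subset by blast
  have eq: "{H. (H \<subseteq> X \<and> card H = d+1) \<and> H \<notin> FF \<and> B F \<subseteq> H} = (\<lambda>y. insert y (B F)) ` (X - F)"
  proof (rule set_eqI, rule iffI)
    fix H assume "H \<in> {H. (H \<subseteq> X \<and> card H = d+1) \<and> H \<notin> FF \<and> B F \<subseteq> H}"
    hence HX: "H \<subseteq> X" and cH: "card H = d+1" and HF: "H \<notin> FF" and BH: "B F \<subseteq> H" by auto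
    have finH: "finite H" using HX finX finite_subset by blast
    have "card (H - B F) = 1" using cH cB BH finB by (simp add: card_Diff_subset)
    then obtain y where y: "H - B F = {y}" using card_1_singletonE by blast
    have Hy: "H = insert y (B F)" using y BH by blast
    have "y \<notin> F"
    proof
      assume "y \<in> F"
      hence "H \<subseteq> F" using Hy BsF by blast
      hence "H = F" using card_subset_eq[OF finF] cH cF by auto
      thus False using HF F by simp
    qed
    thus "H \<in> (\<lambda>y. insert y (B F)) ` (X - F)" using Hy HX y by blast
  next
    fix H assume "H \<in> (\<lambda>y. insert y (B F)) ` (X - F)"
    then obtain y where y: "y \<in> X" "y \<notin> F" and Hy: "H = insert y (B F)" by blast
    have "y \<notin> B F" using y BsF by blast
    hence cH: "card H = d+1" using Hy cB finB by simp
    have HX: "H \<subseteq> X" using Hy y BsF FsX by blast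
    have "H \<notin> FF"
    proof
      assume "H \<in> FF"
      hence "H = F" using priv F Hy by blast
      thus False using Hy y by blast
    qed
    thus "H \<in> {H. (H \<subseteq> X \<and> card H = d+1) \<and> H \<notin> FF \<and> B F \<subseteq> H}" using cH HX Hy by blast
  qed
  have inj: "inj_on (\<lambda>y. insert y (B F)) (X - F)"
  proof (rule inj_onI)
    fix y z assume "y \<in> X - F" "z \<in> X - F" "insert y (B F) = insert z (B F)"
    thus "y = z" using BsF by blast
  qed
  have "card ((\<lambda>y. insert y (B F)) ` (X - F)) = card (X - F)" using card_image[OF inj] .
  also have "\<dots> = card X - (d+1)" using card_Diff_subset[OF finF FsX] cF by simp
  finally show ?thesis using eq by simp
qed

lemma count_H:
  assumes HX: "H \<subseteq> X" and cH: "card H = d+1"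
  shows "card {F\<in>FF. B F \<subseteq> H} \<le> d+1"
proof -
  have finH: "finite H" using HX finX finite_subset by blast
  have "B ` {F\<in>FF. B F \<subseteq> H} \<subseteq> {D. D \<subseteq> H \<and> card D = d}" using BF by auto
  hence "card (B ` {F\<in>FF. B F \<subseteq> H}) \<le> card {D. D \<subseteq> H \<and> card D = d}"
    by (rule card_mono[rotated]) (use finH in auto)
  also have "\<dots> = d+1" using n_subsets[OF finH, of d] cH by simp
  finally show ?thesis using card_image[OF inj_on_subset[OF injB]] by (metis (no_types, lifting) mem_Collect_eq subsetI)
qed

lemma double:
  "(card X - (d+1)) * card FF = (\<Sum>H\<in>{H. H \<subseteq> X \<and> card H = d+1} - FF. card {F\<in>FF. B F \<subseteq> H})"
proof -
  let ?N = "{H. H \<subseteq> X \<and> card H = d+1} - FF"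
  have finN: "finite ?N" using finX by simp
  have "(card X - (d+1)) * card FF = (\<Sum>F\<in>FF. card X - (d+1))" by simp
  also have "\<dots> = (\<Sum>F\<in>FF. card {H\<in>?N. B F \<subseteq> H})"
  proof (rule sum.cong[OF refl])
    fix F assume "F \<in> FF"
    from count_F[OF this] show "card X - (d+1) = card {H\<in>?N. B F \<subseteq> H}"
      by (simp add: conj_assoc)
  qed
  also have "\<dots> = (\<Sum>F\<in>FF. \<Sum>H\<in>?N. if B F \<subseteq> H then 1 else 0)"
    using finN by (simp add: sum.inter_filter[symmetric])
  also have "\<dots> = (\<Sum>H\<in>?N. \<Sum>F\<in>FF. if B F \<subseteq> H then 1 else 0)" by (rule sum.swap)
  also have "\<dots> = (\<Sum>H\<in>?N. card {F\<in>FF. B F \<subseteq> H})"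
    using finFF by (simp add: sum.inter_filter[symmetric])
  finally show ?thesis .
qed

lemma bound:
  assumes nd: "card X \<ge> d+1"
  shows "card FF \<le> (card X - 1) choose d"
    and "card FF = (card X - 1) choose d \<Longrightarrow> H \<subseteq> X \<Longrightarrow> card H = d+1 \<Longrightarrow> H \<notin> FF
          \<Longrightarrow> D \<subseteq> H \<Longrightarrow> card D = d \<Longrightarrow> D \<in> B ` FF"
proof -
  let ?K = "{H. H \<subseteq> X \<and> card H = d+1}"
  let ?N = "?K - FF"
  let ?g = "\<lambda>H. card {F\<in>FF. B F \<subseteq> H}"
  define n where "n = card X"
  define m where "m = card FF"
  define c where "c = card ?K"
  have c: "c = n choose (d+1)" using n_subsets[OF finX] by (simp add: c_def n_def)
  have FK: "FF \<subseteq> ?K" using FX by auto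
  have finK: "finite ?K" using finX by simp
  have cN: "card ?N = c - m" using card_Diff_subset[OF finFF FK] by (simp add: c_def m_def)
  have mc: "m \<le> c" using card_mono[OF finK FK] by (simp add: c_def m_def)
  have S: "(n - (d+1)) * m = sum ?g ?N" using double by (simp add: n_def m_def)
  have Sle: "sum ?g ?N \<le> (\<Sum>H\<in>?N. d+1)"
    by (rule sum_mono) (use count_H in auto)
  hence Sle2: "sum ?g ?N \<le> (d+1) * (c - m)" using cN by (simp add: mult.commute)
  have npos: "n = Suc (n - 1)" using nd n_def by simp
  have key: "(d+1) * c = n * ((n - 1) choose d)"
    using Suc_times_binomial[of d "n-1"] npos c by simp
  have nsplit: "n = (n - (d+1)) + (d+1)" using nd n_def by simp
  have "n * m = (n - (d+1)) * m + (d+1) * m" by (subst nsplit) (rule add_mult_distrib)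
  also have "\<dots> \<le> (d+1) * (c - m) + (d+1) * m" using S Sle2 by simp
  also have "\<dots> = (d+1) * c" using mc by (simp add: add_mult_distrib2[symmetric])
  finally have nm: "n * m \<le> n * ((n - 1) choose d)" using key by simp
  have n0: "n > 0" using nd n_def by simp
  show "card FF \<le> (card X - 1) choose d" using nm n0 by (simp add: m_def n_def)
  assume eqm: "card FF = (card X - 1) choose d" and HX: "H \<subseteq> X" and cH: "card H = d+1"
    and HF: "H \<notin> FF" and DH: "D \<subseteq> H" and cD: "card D = d"
  have "n * m = (d+1) * c" using key eqm by (simp add: m_def n_def)
  moreover have "n * m = (n - (d+1)) * m + (d+1) * m" by (subst nsplit) (rule add_mult_distrib)
  moreover have "(d+1) * c = (d+1) * (c - m) + (d+1) * m" using mc by (simp add: add_mult_distrib2[symmetric])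
  ultimately have "(n - (d+1)) * m + (d+1) * m = (d+1) * (c - m) + (d+1) * m" by simp
  hence Seq: "sum ?g ?N = (\<Sum>H\<in>?N. d+1)" using S cN by (simp add: mult.commute)
  have gH: "?g H = d+1"
  proof (rule ccontr)
    assume "?g H \<noteq> d+1"
    hence "?g H < d+1" using count_H[OF HX cH] by simp
    hence "sum ?g ?N < (\<Sum>H\<in>?N. d+1)"
      using HX cH HF count_H finK
      by (intro sum_strict_mono_ex1) auto
    thus False using Seq by simp
  qed
  have finH: "finite H" using HX finX finite_subset by blast
  have sub: "B ` {F\<in>FF. B F \<subseteq> H} \<subseteq> {D. D \<subseteq> H \<and> card D = d}" using BF by auto
  have "card (B ` {F\<in>FF. B F \<subseteq> H}) = d+1"
    using card_image[OF inj_on_subset[OF injB]] gH by (metis (no_types, lifting) mem_Collect_eq subsetI)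
  also have "\<dots> = card {D. D \<subseteq> H \<and> card D = d}" using n_subsets[OF finH, of d] cH by simp
  finally have "B ` {F\<in>FF. B F \<subseteq> H} = {D. D \<subseteq> H \<and> card D = d}"
    using card_subset_eq[OF _ sub] finH by simp
  thus "D \<in> B ` FF" using DH cD by blast
qed

lemma sup_mem:
  assumes nd: "card X \<ge> d+1" and eqm: "card FF = (card X - 1) choose d"
    and D: "D \<subseteq> X" "card D = d" "D \<notin> B ` FF"
    and H: "H \<subseteq> X" "card H = d+1" "D \<subseteq> H"
  shows "H \<in> FF"
  using bound(2)[OF nd eqm H(1,2) _ H(3) D(2)] D(3) by blast

lemma pivot:
  assumes nd: "card X \<ge> d+2" and eqm: "card FF = (card X - 1) choose d"
    and D: "D \<subseteq> X" "card D = d" "D \<notin> B ` FF"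
  shows "\<exists>a\<in>D. \<forall>y\<in>X-D. B (insert y D) = insert y (D - {a})"
proof -
  have nd1: "card X \<ge> d+1" using nd by simp
  have finD: "finite D" using D finX finite_subset by blast
  have cXD: "card (X - D) \<ge> 2" using card_Diff_subset[OF finD D(1)] D(2) nd by simp
  have finXD: "finite (X - D)" using finX by simp
  have "X - D \<noteq> {}" using cXD by (intro notI) simp
  then obtain y0 where y0: "y0 \<in> X - D" by blast
  have "card (X - D - {y0}) \<ge> 1" using cXD y0 finXD by (simp add: card_Diff_singleton)
  hence "X - D - {y0} \<noteq> {}" by (intro notI) simp
  then obtain y1 where y1: "y1 \<in> X - D - {y0}" by blast
  have y01: "y0 \<in> X - D" "y1 \<in> X - D" "y0 \<noteq> y1" using y0 y1 by auto
  have memI: "\<And>y. y \<in> X - D \<Longrightarrow> insert y D \<in> FF"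
  proof -
    fix y assume y: "y \<in> X - D"
    show "insert y D \<in> FF"
    proof (rule sup_mem[OF nd1 eqm D])
      show "insert y D \<subseteq> X" using y D(1) by blast
      show "D \<subseteq> insert y D" by blast
      have "y \<notin> D" using y by blast
      thus "card (insert y D) = d+1" using finD D(2) by simp
    qed
  qed
  define H0 where "H0 = insert y0 D"
  have H0F: "H0 \<in> FF" using memI y01 H0_def by simp
  have BH0: "B H0 \<subseteq> H0" "card (B H0) = d" using BF H0F by auto
  have finH0: "finite H0" using H0_def finD by simp
  have cH0: "card H0 = d+1" using FX H0F by auto
  have "B H0 \<noteq> D"
  proof
    assume "B H0 = D"
    hence "insert y1 D = H0" using privI[OF H0F memI[OF y01(2)]] by auto
    thus False using y01 H0_def by blast
  qed
  hence y0B: "y0 \<in> B H0"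
  proof -
    assume ne: "B H0 \<noteq> D"
    show ?thesis
    proof (rule ccontr)
      assume "y0 \<notin> B H0"
      hence "B H0 \<subseteq> D" using BH0 H0_def by blast
      hence "B H0 = D" using card_subset_eq[OF finD] BH0(2) D(2) by metis
      thus False using ne by contradiction
    qed
  qed
  have finBH0: "finite (B H0)" using finH0 BH0(1) finite_subset by blast
  have "card (H0 - B H0) = card H0 - card (B H0)" using card_Diff_subset[OF finBH0 BH0(1)] .
  hence "card (H0 - B H0) = 1" using BH0(2) cH0 by simp
  then obtain a where a: "H0 - B H0 = {a}" using card_1_singletonE by blast
  have aH0: "a \<in> H0" and aB: "a \<notin> B H0" using a by blast+
  have ay0: "a \<noteq> y0" using aB y0B by metis
  have aD: "a \<in> D" using aH0 ay0 unfolding H0_def by simp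
  have "B H0 = H0 - {a}" using a BH0(1) by blast
  hence BH0eq: "B H0 = insert y0 (D - {a})" using ay0 unfolding H0_def by auto
  have "\<forall>y\<in>X-D. B (insert y D) = insert y (D - {a})"
  proof
    fix y assume y: "y \<in> X - D"
    show "B (insert y D) = insert y (D - {a})"
    proof (cases "y = y0")
      case True thus ?thesis using BH0eq H0_def by simp
    next
      case False
      define N where "N = insert y (B H0)"
      have yH0: "y \<notin> H0" using y False H0_def by blast
      have finB: "finite (B H0)" using finH0 BH0(1) finite_subset by blast
      have "y \<notin> B H0" using yH0 BH0(1) by blast
      hence cN: "card N = d+1" using N_def BH0(2) finB by simp
      have NX: "N \<subseteq> X" using N_def y BH0(1) H0_def y01 D(1) by blast
      have NF: "N \<notin> FF"
      proof
        assume "N \<in> FF"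
        hence "N = H0" using privI[OF H0F] N_def by blast
        thus False using N_def yH0 by blast
      qed
      have "insert y (D - {a}) \<subseteq> N" using N_def BH0eq by blast
      moreover have "card (insert y (D - {a})) = d"
      proof -
        have "0 < card D" using aD finD card_gt_0_iff by blast
        moreover have "y \<notin> D - {a}" using y by blast
        ultimately show ?thesis using aD D(2) finD by (simp add: card_Diff_singleton)
      qed
      ultimately have "insert y (D - {a}) \<in> B ` FF" using bound(2)[OF nd1 eqm NX cN NF] by blast
      then obtain F where F: "F \<in> FF" "B F = insert y (D - {a})" by blast
      have "insert y D = F" using privI[OF F(1) memI[OF y]] F(2) by blast
      thus ?thesis using F by simp
    qed
  qed
  thus ?thesis using aD by blast
qed

lemma exch:
  assumes nd: "card X \<ge> d+2" and eqm: "card FF = (card X - 1) choose d"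
    and D: "D \<subseteq> X" "card D = d" "D \<notin> B ` FF"
    and a: "a \<in> D" "\<forall>y\<in>X-D. B (insert y D) = insert y (D - {a})"
    and u: "u \<in> D" "u \<noteq> a" and y: "y \<in> X - D"
  shows "insert y (D - {u}) \<subseteq> X \<and> card (insert y (D - {u})) = d
    \<and> insert y (D - {u}) \<notin> B ` FF \<and> a \<in> insert y (D - {u})
    \<and> (\<forall>z\<in>X - insert y (D - {u}). B (insert z (insert y (D - {u}))) = insert z (insert y (D - {u}) - {a}))"
proof -
  define D2 where "D2 = insert y (D - {u})"
  have nd1: "card X \<ge> d+1" using nd by simp
  have finD: "finite D" using D finX finite_subset by blast
  have D2X: "D2 \<subseteq> X" using D2_def D y by blast
  have "0 < card D" using u finD card_gt_0_iff by blast
  hence cD2: "card D2 = d" using D2_def D(2) u y finD by (simp add: card_Diff_singleton)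
  have memI: "\<And>y. y \<in> X - D \<Longrightarrow> insert y D \<in> FF"
  proof -
    fix y assume y: "y \<in> X - D"
    show "insert y D \<in> FF"
    proof (rule sup_mem[OF nd1 eqm D])
      show "insert y D \<subseteq> X" using y D(1) by blast
      show "D \<subseteq> insert y D" by blast
      have "y \<notin> D" using y by blast
      thus "card (insert y D) = d+1" using finD D(2) by simp
    qed
  qed
  have free2: "D2 \<notin> B ` FF"
  proof
    assume "D2 \<in> B ` FF"
    then obtain F where F: "F \<in> FF" "B F = D2" by blast
    have "D2 \<subseteq> insert y D" using D2_def by blast
    hence "insert y D = F" using priv F memI[OF y] by blast
    hence "B (insert y D) = D2" using F by simp
    moreover have "B (insert y D) = insert y (D - {a})" using a(2) y by blast
    ultimately have "insert y (D - {a}) = D2" by simp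
    moreover have "u \<in> insert y (D - {a})" using u by blast
    ultimately have "u \<in> insert y (D - {u})" unfolding D2_def by simp
    thus False using u y by blast
  qed
  obtain a2 where a2: "a2 \<in> D2" "\<forall>z\<in>X-D2. B (insert z D2) = insert z (D2 - {a2})"
    using pivot[OF nd eqm D2X cD2 free2] by blast
  have uX: "u \<in> X - D2" using u D D2_def y by blast
  have ins: "insert u D2 = insert y D" using D2_def u by blast
  have e1: "B (insert u D2) = insert u (D2 - {a2})" using a2(2) uX by blast
  have e2: "B (insert y D) = insert y (D - {a})" using a(2) y by blast
  have eq: "insert u (D2 - {a2}) = insert y (D - {a})" using e1 e2 ins by simp
  have aD2: "a \<in> D2" using D2_def a(1) u(2) by blast
  have ay: "a \<noteq> y" using a(1) y by blast
  have "a2 = a"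
  proof (rule ccontr)
    assume "a2 \<noteq> a"
    hence "a \<in> insert u (D2 - {a2})" using aD2 by blast
    hence "a \<in> insert y (D - {a})" using eq by simp
    thus False using ay by blast
  qed
  hence "\<forall>z\<in>X - D2. B (insert z D2) = insert z (D2 - {a})" using a2(2) by simp
  thus ?thesis using D2X cD2 free2 aD2 unfolding D2_def by blast
qed

lemma reach:
  assumes nd: "card X \<ge> d+2" and eqm: "card FF = (card X - 1) choose d"
    and E: "E \<subseteq> X" "card E = d" "a \<in> E"
  shows "card (D - E) = k \<Longrightarrow> D \<subseteq> X \<Longrightarrow> card D = d \<Longrightarrow> D \<notin> B ` FF \<Longrightarrow> a \<in> D
    \<Longrightarrow> \<forall>y\<in>X-D. B (insert y D) = insert y (D - {a}) \<Longrightarrow> E \<notin> B ` FF"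
proof (induction k arbitrary: D rule: less_induct)
  case (less k D)
  have finD: "finite D" using less.prems(2) finX finite_subset by blast
  have finE: "finite E" using E(1) finX finite_subset by blast
  show ?case
  proof (cases "D - E = {}")
    case True
    hence "D \<subseteq> E" by blast
    hence "D = E" using card_subset_eq[OF finE] less.prems(3) E(2) by simp
    thus ?thesis using less.prems(4) by simp
  next
    case False
    then obtain u where u: "u \<in> D" "u \<notin> E" by blast
    have "E - D \<noteq> {}"
    proof
      assume "E - D = {}"
      hence "E \<subseteq> D" by blast
      hence "E = D" using card_subset_eq[OF finD] less.prems(3) E(2) by simp
      thus False using u by blast
    qed
    then obtain y where y: "y \<in> E" "y \<notin> D" by blast
    have ua: "u \<noteq> a" using u E(3) by blast
    have yX: "y \<in> X - D" using y E(1) by blast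
    define D2 where "D2 = insert y (D - {u})"
    have X2: "D2 \<subseteq> X \<and> card D2 = d \<and> D2 \<notin> B ` FF \<and> a \<in> D2
      \<and> (\<forall>z\<in>X - D2. B (insert z D2) = insert z (D2 - {a}))"
      unfolding D2_def
      by (rule exch[OF nd eqm less.prems(2,3,4,5,6) u(1) ua yX])
    have "D2 - E = (D - E) - {u}" using D2_def y by blast
    hence "card (D2 - E) < k" using less.prems(1) u finD
      by (metis Diff_iff card_Diff1_less finite_Diff)
    thus ?thesis using less.IH X2 by blast
  qed
qed

lemma star_sub:
  assumes nd: "card X \<ge> d+2" and d1: "d \<ge> 1" and eqm: "card FF = (card X - 1) choose d"
  shows "\<exists>a\<in>X. {F. F \<subseteq> X \<and> card F = d+1 \<and> a \<in> F} \<subseteq> FF"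
proof -
  define n where "n = card X"
  have nd1: "card X \<ge> d+1" using nd by simp
  have BFsub: "B ` FF \<subseteq> {D. D \<subseteq> X \<and> card D = d}" using BF FX by fastforce
  have c1: "card (B ` FF) = (n - 1) choose d" using card_image[OF injB] eqm n_def by simp
  have c2: "card {D. D \<subseteq> X \<and> card D = d} = n choose d" using n_subsets[OF finX] n_def by simp
  have "n choose d = (n - 1 choose (d - 1)) + (n - 1 choose d)"
    using binomial_Suc_Suc[of "n-1" "d-1"] nd d1 n_def by (simp add: Suc_diff_le)
  moreover have "0 < n - 1 choose (d - 1)" using nd n_def by (intro zero_less_binomial) simp
  ultimately have "card (B ` FF) < card {D. D \<subseteq> X \<and> card D = d}" using c1 c2 by simp
  hence "\<not> {D. D \<subseteq> X \<and> card D = d} \<subseteq> B ` FF"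
    using card_mono[OF finite_imageI[OF finFF]] by (meson leD)
  then obtain D0 where D0: "D0 \<subseteq> X" "card D0 = d" "D0 \<notin> B ` FF" by blast
  obtain a where a: "a \<in> D0" "\<forall>y\<in>X-D0. B (insert y D0) = insert y (D0 - {a})"
    using pivot[OF nd eqm D0] by blast
  have "{F. F \<subseteq> X \<and> card F = d+1 \<and> a \<in> F} \<subseteq> FF"
  proof
    fix H assume "H \<in> {F. F \<subseteq> X \<and> card F = d+1 \<and> a \<in> F}"
    hence H: "H \<subseteq> X" "card H = d+1" "a \<in> H" by auto
    have finH: "finite H" using H(1) finX finite_subset by blast
    have "card (H - {a}) = d" using H finH by simp
    hence "H - {a} \<noteq> {}" using d1 by (intro notI) simp
    then obtain h where h: "h \<in> H" "h \<noteq> a" by blast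
    define E where "E = H - {h}"
    have E: "E \<subseteq> X" "card E = d" "a \<in> E" using E_def H h finH by auto
    have "E \<notin> B ` FF" using reach[OF nd eqm E refl D0 a(1) a(2)] .
    thus "H \<in> FF" using sup_mem[OF nd1 eqm E(1,2) _ H(1,2)] E_def by blast
  qed
  thus ?thesis using a D0 by blast
qed

end

lemma star_card:
  assumes finX: "finite X" and a: "a \<in> X"
  shows "card {F. F \<subseteq> X \<and> card F = Suc d \<and> a \<in> F} = (card X - 1) choose d"
proof -
  have eq: "{F. F \<subseteq> X \<and> card F = Suc d \<and> a \<in> F} = insert a ` {S. S \<subseteq> X - {a} \<and> card S = d}"
  proof (rule set_eqI, rule iffI)
    fix F assume F: "F \<in> {F. F \<subseteq> X \<and> card F = Suc d \<and> a \<in> F}"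
    have finF: "finite F" using F finX finite_subset by blast
    have "F = insert a (F - {a})" "F - {a} \<subseteq> X - {a}" "card (F - {a}) = d"
      using F finF by auto
    thus "F \<in> insert a ` {S. S \<subseteq> X - {a} \<and> card S = d}" by blast
  next
    fix F assume "F \<in> insert a ` {S. S \<subseteq> X - {a} \<and> card S = d}"
    then obtain S where S: "S \<subseteq> X - {a}" "card S = d" "F = insert a S" by blast
    have "finite S" using S(1) finX finite_subset by blast
    moreover have "a \<notin> S" using S(1) by blast
    ultimately show "F \<in> {F. F \<subseteq> X \<and> card F = Suc d \<and> a \<in> F}" using S a by auto
  qed
  have inj: "inj_on (insert a) {S. S \<subseteq> X - {a} \<and> card S = d}"
    by (rule inj_onI) blast
  show ?thesis using eq card_image[OF inj] n_subsets[of "X - {a}" d] finX a by simp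
qed

theorem theorem5p1:
  fixes n d :: nat and \<F> :: "nat set set"
  assumes "d + 1 \<ge> 3" and "n \<ge> d + 1"
    and "\<F> \<subseteq> ksubsets n (d + 1)"
    and "\<forall>F\<in>\<F>. \<exists>B. B \<subseteq> F \<and> card B = d \<and> (\<forall>F'\<in>\<F>. F' \<inter> F \<noteq> B)"
  shows "card \<F> \<le> (n - 1) choose d
    \<and> (card \<F> = (n - 1) choose d \<longleftrightarrow>
         (\<exists>a\<in>{1..n}. \<F> = {F \<in> ksubsets n (d + 1). a \<in> F}))"
proof -
  define X where "X = {1..n}"
  have finX: "finite X" and cX: "card X = n" using X_def by auto
  obtain B where B: "\<forall>F\<in>\<F>. B F \<subseteq> F \<and> card (B F) = d \<and> (\<forall>F'\<in>\<F>. F' \<inter> F \<noteq> B F)"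
    using assms(4) by metis
  have FX: "\<forall>F\<in>\<F>. F \<subseteq> X \<and> card F = d+1" using assms(3) X_def ksubsets_def by auto
  have BF: "\<forall>F\<in>\<F>. B F \<subseteq> F \<and> card (B F) = d" using B by blast
  have priv: "\<forall>F\<in>\<F>. \<forall>G\<in>\<F>. B F \<subseteq> G \<longrightarrow> G = F"
  proof (intro ballI impI)
    fix F G assume F: "F \<in> \<F>" and G: "G \<in> \<F>" and BG: "B F \<subseteq> G"
    show "G = F"
    proof (rule ccontr)
      assume ne: "G \<noteq> F"
      have finF: "finite F" using FX F finX finite_subset by blast
      have finG: "finite G" using FX G finX finite_subset by blast
      have "G \<inter> F \<noteq> F"
      proof
        assume "G \<inter> F = F"
        hence "F \<subseteq> G" by blast
        hence "F = G" by (rule card_subset_eq[OF finG]) (use FX F G in simp)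
        thus False using ne by simp
      qed
      hence "card (G \<inter> F) < card F" using finF by (meson Int_lower2 psubsetI psubset_card_mono)
      hence c1: "card (G \<inter> F) \<le> d" using FX F by simp
      have sub: "B F \<subseteq> G \<inter> F" using BG BF F by blast
      have "B F = G \<inter> F"
        by (rule card_seteq[OF _ sub]) (use finF c1 BF F in auto)
      thus False using B F G by blast
    qed
  qed
  have nd1: "card X \<ge> d+1" using cX assms(2) by simp
  have bnd: "card \<F> \<le> (n - 1) choose d"
    using bound(1)[OF finX FX BF priv nd1] cX by simp
  have starK: "\<And>a. {F \<in> ksubsets n (d + 1). a \<in> F} = {F. F \<subseteq> X \<and> card F = Suc d \<and> a \<in> F}"
    using X_def ksubsets_def by auto
  have finFF: "finite \<F>" using finFF[OF finX FX BF priv] .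
  have "card \<F> = (n - 1) choose d \<Longrightarrow> \<exists>a\<in>X. {F. F \<subseteq> X \<and> card F = d+1 \<and> a \<in> F} \<subseteq> \<F>"
  proof -
    assume eqm: "card \<F> = (n - 1) choose d"
    show ?thesis
    proof (cases "n = d + 1")
      case False
      hence nd: "card X \<ge> d+2" using cX assms(2) by simp
      show ?thesis using star_sub[OF finX FX BF priv nd _ ] eqm cX assms(1) by simp
    next
      case True
      have "\<F> \<noteq> {}" using eqm True by auto
      then obtain F where F: "F \<in> \<F>" by blast
      have "F = X" by (rule card_subset_eq[OF finX]) (use FX F cX True in auto)
      have "1 \<in> X" using X_def True by simp
      moreover have "{F. F \<subseteq> X \<and> card F = d+1 \<and> 1 \<in> F} \<subseteq> \<F>"
      proof
        fix H assume "H \<in> {F. F \<subseteq> X \<and> card F = d+1 \<and> 1 \<in> F}"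
        hence "H \<subseteq> X" "card H = card X" using cX True by auto
        hence "H = X" using card_subset_eq[OF finX] by blast
        thus "H \<in> \<F>" using F \<open>F = X\<close> by simp
      qed
      ultimately show ?thesis by blast
    qed
  qed
  moreover have "\<And>a. a \<in> X \<Longrightarrow> card {F. F \<subseteq> X \<and> card F = Suc d \<and> a \<in> F} = (n - 1) choose d"
    using star_card[OF finX] cX by simp
  ultimately have iff: "card \<F> = (n - 1) choose d \<longleftrightarrow>
         (\<exists>a\<in>X. \<F> = {F. F \<subseteq> X \<and> card F = Suc d \<and> a \<in> F})"
  proof -
    assume L: "card \<F> = (n - 1) choose d \<Longrightarrow> \<exists>a\<in>X. {F. F \<subseteq> X \<and> card F = d+1 \<and> a \<in> F} \<subseteq> \<F>"
      and C: "\<And>a. a \<in> X \<Longrightarrow> card {F. F \<subseteq> X \<and> card F = Suc d \<and> a \<in> F} = (n - 1) choose d"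
    show ?thesis
    proof
      assume eqm: "card \<F> = (n - 1) choose d"
      then obtain a where a: "a \<in> X" and sub: "{F. F \<subseteq> X \<and> card F = Suc d \<and> a \<in> F} \<subseteq> \<F>"
        using L by auto
      have "{F. F \<subseteq> X \<and> card F = Suc d \<and> a \<in> F} = \<F>"
        using card_subset_eq[OF finFF sub] C[OF a] eqm by simp
      thus "\<exists>a\<in>X. \<F> = {F. F \<subseteq> X \<and> card F = Suc d \<and> a \<in> F}" using a by blast
    next
      assume "\<exists>a\<in>X. \<F> = {F. F \<subseteq> X \<and> card F = Suc d \<and> a \<in> F}"
      then obtain a where "a \<in> X" "\<F> = {F. F \<subseteq> X \<and> card F = Suc d \<and> a \<in> F}" by blast
      thus "card \<F> = (n - 1) choose d" using C by simp
    qed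
  qed
  show ?thesis using bnd iff starK X_def by simp
qed

end
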